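(* In the setting of the context, let $\mathbf{X}\in\{0,1\}^E$ be the indicator vector of edges matched by MMP-ALG, and for $u\in U$ let $\mathbf{X}_u$ be the restriction of $\mathbf{X}$ to the coordinates in $E(u)$ (other entries set to $0$). Let $x^*_u=\sum_{e\in E(u)}x^*_e$ and let $\mathbf{e}_e$ be the unit vector with a $1$ only at coordinate $e$. Then, in the limit $T\to\infty$ with $|U|=o(\sqrt{T})$, $\Pr[\mathbf{X}_u=\mathbf{0}]=e^{-x^*_u}$ and $\Pr[\mathbf{X}_u=\mathbf{e}_e]=(1-e^{-x^*_u})\frac{x^*_e}{x^*_u}$ for every $e\in E(u)$.
   Context: Bipartite graph $G=(U,V,E)$; online rounds $t=1,\dots,T$, in each of which independently at most one $v\in V$ arrives, $v$ with probability $p_v$, $\sum_v p_v\le1$, $r_v=Tp_v\in[0,1]$. Each $u\in U$ can be matched at most once. $E(w)$ denotes the set of edges incident to $w$. $\mathbf{x}^*\in[0,1]^E$ satisfies $\sum_{e\in E(v)}x^*_e\le r_v$ for all $v\in V$ and $\sum_{e\in E(u)}x^*_e\le1$ for all $u\in U$. MMP-ALG: when $v$ arrives, sample at most one edge $e\in E(v)$, each $e$ with probability $x^*_e/r_v$; if $e=(u,v)$ is sampled and $u$ is still unmatched, match $e$, otherwise skip. *)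

theory Defs
  imports "HOL-Probability.Probability" "HOL-Library.Landau_Symbols"
begin

definition edges_at_u :: "('u \<times> 'v) set \<Rightarrow> 'u \<Rightarrow> ('u \<times> 'v) set" where
  "edges_at_u E u = {e \<in> E. fst e = u}"

definition edges_at_v :: "('u \<times> 'v) set \<Rightarrow> 'v \<Rightarrow> ('u \<times> 'v) set" where
  "edges_at_v E v = {e \<in> E. snd e = v}"

definition rate :: "nat \<Rightarrow> ('v \<Rightarrow> real) \<Rightarrow> 'v \<Rightarrow> real" where
  "rate T p v = real T * p v"

text \<open>Valid instance for horizon T: graph, arrival probabilities p, LP solution x*.\<close>
definition mmp_instance ::
  "'u set \<Rightarrow> 'v set \<Rightarrow> ('u \<times> 'v) set \<Rightarrow> ('v \<Rightarrow> real) \<Rightarrow> (('u \<times> 'v) \<Rightarrow> real) \<Rightarrow> nat \<Rightarrow> bool" where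
  "mmp_instance U V E p x T \<longleftrightarrow>
     finite U \<and> finite V \<and> E \<subseteq> U \<times> V \<and>
     (\<forall>v\<in>V. 0 \<le> p v) \<and> (\<Sum>v\<in>V. p v) \<le> 1 \<and>
     (\<forall>v\<in>V. rate T p v \<le> 1) \<and>
     (\<forall>e\<in>E. 0 \<le> x e \<and> x e \<le> 1) \<and>
     (\<forall>v\<in>V. (\<Sum>e\<in>edges_at_v E v. x e) \<le> rate T p v) \<and>
     (\<forall>u\<in>U. (\<Sum>e\<in>edges_at_u E u. x e) \<le> 1)"

definition arrival_pmf :: "'v set \<Rightarrow> ('v \<Rightarrow> real) \<Rightarrow> 'v option pmf" where
  "arrival_pmf V p = embed_pmf (\<lambda>w. case w of
       None \<Rightarrow> 1 - (\<Sum>v\<in>V. p v)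
     | Some v \<Rightarrow> if v \<in> V then p v else 0)"

definition sample_pmf :: "('u \<times> 'v) set \<Rightarrow> (('u \<times> 'v) \<Rightarrow> real) \<Rightarrow> real \<Rightarrow> 'v \<Rightarrow> ('u \<times> 'v) option pmf" where
  "sample_pmf E x rv v = embed_pmf (\<lambda>w. case w of
       None \<Rightarrow> 1 - (\<Sum>e\<in>edges_at_v E v. x e / rv)
     | Some e \<Rightarrow> if e \<in> edges_at_v E v then x e / rv else 0)"

definition mmp_step :: "'v set \<Rightarrow> ('u \<times> 'v) set \<Rightarrow> ('v \<Rightarrow> real) \<Rightarrow> (('u \<times> 'v) \<Rightarrow> real) \<Rightarrow> nat
      \<Rightarrow> ('u \<times> 'v) set \<Rightarrow> ('u \<times> 'v) set pmf" where
  "mmp_step V E p x T M = bind_pmf (arrival_pmf V p) (\<lambda>a. case a of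
       None \<Rightarrow> return_pmf M
     | Some v \<Rightarrow> map_pmf (\<lambda>s. case s of
            None \<Rightarrow> M
          | Some e \<Rightarrow> if (\<exists>e'\<in>M. fst e' = fst e) then M else insert e M)
          (sample_pmf E x (rate T p v) v))"

primrec mmp_rounds :: "'v set \<Rightarrow> ('u \<times> 'v) set \<Rightarrow> ('v \<Rightarrow> real) \<Rightarrow> (('u \<times> 'v) \<Rightarrow> real) \<Rightarrow> nat
      \<Rightarrow> nat \<Rightarrow> ('u \<times> 'v) set pmf" where
  "mmp_rounds V E p x T 0 = return_pmf {}"
| "mmp_rounds V E p x T (Suc n) = bind_pmf (mmp_rounds V E p x T n) (mmp_step V E p x T)"

definition mmp_run :: "'v set \<Rightarrow> ('u \<times> 'v) set \<Rightarrow> ('v \<Rightarrow> real) \<Rightarrow> (('u \<times> 'v) \<Rightarrow> real) \<Rightarrow> nat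
      \<Rightarrow> ('u \<times> 'v) set pmf" where
  "mmp_run V E p x T = mmp_rounds V E p x T T"

definition match_vec :: "('u \<times> 'v) set \<Rightarrow> ('u \<times> 'v) \<Rightarrow> real" where
  "match_vec M = (\<lambda>e. if e \<in> M then 1 else 0)"

definition restrict_vec :: "('u \<times> 'v) set \<Rightarrow> 'u \<Rightarrow> (('u \<times> 'v) \<Rightarrow> real) \<Rightarrow> ('u \<times> 'v) \<Rightarrow> real" where
  "restrict_vec E u X = (\<lambda>e. if e \<in> edges_at_u E u then X e else 0)"

definition unit_vec :: "('u \<times> 'v) \<Rightarrow> ('u \<times> 'v) \<Rightarrow> real" where
  "unit_vec e = (\<lambda>e'. if e' = e then 1 else 0)"

definition x_vertex :: "('u \<times> 'v) set \<Rightarrow> (('u \<times> 'v) \<Rightarrow> real) \<Rightarrow> 'u \<Rightarrow> real" where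
  "x_vertex E x u = (\<Sum>e\<in>edges_at_u E u. x e)"

end

theory Submission
  imports Defs
begin


lemma pow_diff_le:
  fixes z y :: real
  assumes "\<bar>z\<bar> \<le> 1" "\<bar>y\<bar> \<le> 1"
  shows "\<bar>z ^ n - y ^ n\<bar> \<le> real n * \<bar>z - y\<bar>"
proof (induction n)
  case 0 then show ?case by simp
next
  case (Suc n)
  have "z ^ Suc n - y ^ Suc n = z * (z ^ n - y ^ n) + y ^ n * (z - y)" by (simp add: algebra_simps)
  then have "\<bar>z ^ Suc n - y ^ Suc n\<bar> \<le> \<bar>z\<bar> * \<bar>z ^ n - y ^ n\<bar> + \<bar>y\<bar> ^ n * \<bar>z - y\<bar>"
    by (metis abs_mult abs_triangle_ineq power_abs)
  also have "\<dots> \<le> 1 * (real n * \<bar>z - y\<bar>) + 1 * \<bar>z - y\<bar>"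
    using assms Suc by (intro add_mono mult_mono) (auto simp: power_le_one)
  finally show ?case by (simp add: algebra_simps)
qed

lemma exp_approx:
  fixes a :: real and T :: nat
  assumes "0 \<le> a" "a \<le> 1" "1 \<le> T"
  shows "\<bar>(1 - a / T) ^ T - exp (- a)\<bar> \<le> 1 / T"
proof -
  define t where "t = a / T"
  have t0: "0 \<le> t" "t \<le> 1" using assms by (auto simp: t_def divide_le_eq_1)
  have ey: "exp (- t) ^ T = exp (- a)"
    using assms by (simp add: t_def flip: exp_of_nat_mult)
  have lo: "1 - t \<le> exp (- t)" using exp_ge_add_one_self[of "- t"] by simp
  have "exp (- t) \<le> 1 / (1 + t)"
    using exp_ge_add_one_self[of t] t0 by (simp add: exp_minus field_simps)
  moreover have "1 / (1 + t) \<le> 1 - t + t\<^sup>2"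
    using t0 by (simp add: field_simps power2_eq_square)
  ultimately have hi: "exp (- t) - (1 - t) \<le> t\<^sup>2" by simp
  have "\<bar>(1 - t) ^ T - exp (- t) ^ T\<bar> \<le> real T * \<bar>(1 - t) - exp (- t)\<bar>"
    using t0 by (intro pow_diff_le) auto
  also have "\<dots> \<le> real T * t\<^sup>2" using lo hi by (intro mult_left_mono) auto
  also have "\<dots> = a\<^sup>2 / T" using assms by (simp add: t_def power2_eq_square field_simps)
  also have "\<dots> \<le> 1 / T" using assms by (intro divide_right_mono) (auto simp: power_le_one)
  finally show ?thesis using ey by (simp add: t_def)
qed


lemma sum_approx:
  fixes a xe :: real and T :: nat
  assumes "0 \<le> xe" "xe \<le> a" "a \<le> 1" "1 \<le> T"
  shows "\<bar>xe / T * (\<Sum>k<T. (1 - a / T) ^ k) - (1 - exp (- a)) * xe / a\<bar> \<le> 1 / T"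
proof (cases "a = 0")
  case True
  then have "xe = 0" using assms by simp
  then show ?thesis by simp
next
  case False
  then have a0: "0 < a" using assms by simp
  define r where "r = 1 - a / T"
  have "1 - r ^ T = (1 - r) * (\<Sum>k<T. r ^ k)" by (rule one_diff_power_eq)
  moreover have "1 - r = a / T" by (simp add: r_def)
  ultimately have S: "(\<Sum>k<T. r ^ k) = T * (1 - r ^ T) / a"
    using a0 assms by (simp add: field_simps)
  have "xe / T * (\<Sum>k<T. r ^ k) - (1 - exp (- a)) * xe / a = xe / a * (exp (- a) - r ^ T)"
    using a0 assms by (simp add: S field_simps)
  also have "\<bar>\<dots>\<bar> = xe / a * \<bar>r ^ T - exp (- a)\<bar>" using a0 assms by (simp add: abs_mult abs_minus_commute)
  also have "\<dots> \<le> 1 * (1 / T)"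
    using a0 assms exp_approx[of a T] by (intro mult_mono) (auto simp: r_def divide_le_eq_1)
  finally show ?thesis by (simp add: r_def)
qed


context
  fixes U :: "'u set" and V :: "'v set" and E :: "('u \<times> 'v) set"
    and p :: "'v \<Rightarrow> real" and x :: "('u \<times> 'v) \<Rightarrow> real" and T :: nat
  assumes inst: "mmp_instance U V E p x T"
begin

lemma finE: "finite E" "E \<subseteq> U \<times> V" "finite V"
  using inst unfolding mmp_instance_def by (auto intro: finite_subset)

lemma arrival_ok:
  "(\<forall>w. 0 \<le> (case w of None \<Rightarrow> 1 - (\<Sum>v\<in>V. p v) | Some v \<Rightarrow> if v \<in> V then p v else 0)) \<and>
   (\<integral>\<^sup>+w. ennreal (case w of None \<Rightarrow> 1 - (\<Sum>v\<in>V. p v) | Some v \<Rightarrow> if v \<in> V then p v else 0) \<partial>count_space UNIV) = 1"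
proof
  show "\<forall>w. 0 \<le> (case w of None \<Rightarrow> 1 - (\<Sum>v\<in>V. p v) | Some v \<Rightarrow> if v \<in> V then p v else 0)"
    using inst unfolding mmp_instance_def by (auto split: option.split)
  let ?f = "\<lambda>w. (case w of None \<Rightarrow> 1 - (\<Sum>v\<in>V. p v) | Some v \<Rightarrow> if v \<in> V then p v else 0)"
  have "(\<integral>\<^sup>+w. ennreal (?f w) \<partial>count_space UNIV) = (\<Sum>w\<in>insert None (Some ` V). ennreal (?f w))"
    by (rule nn_integral_count_space') (auto simp: finE split: option.split)
  also have "\<dots> = ennreal (\<Sum>w\<in>insert None (Some ` V). ?f w)"
    using inst unfolding mmp_instance_def
    by (intro sum_ennreal) (auto split: option.split)
  also have "(\<Sum>w\<in>insert None (Some ` V). ?f w) = 1"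
    using finE by (simp add: sum.reindex)
  finally show "(\<integral>\<^sup>+w. ennreal (?f w) \<partial>count_space UNIV) = 1" by simp
qed

lemma pmf_arrival: "pmf (arrival_pmf V p) w = (case w of None \<Rightarrow> 1 - (\<Sum>v\<in>V. p v) | Some v \<Rightarrow> if v \<in> V then p v else 0)"
  unfolding arrival_pmf_def using arrival_ok by (subst pmf_embed_pmf) auto

lemma sample_ok:
  fixes v :: 'v
  defines "f \<equiv> \<lambda>w. (case w of None \<Rightarrow> 1 - (\<Sum>e\<in>edges_at_v E v. x e / rate T p v)
     | Some e \<Rightarrow> if e \<in> edges_at_v E v then x e / rate T p v else 0)"
  shows "(\<forall>w. 0 \<le> f w) \<and> (\<integral>\<^sup>+w. ennreal (f w) \<partial>count_space UNIV) = 1"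
proof -
  have fin: "finite (edges_at_v E v)" using finE unfolding edges_at_v_def by auto
  have sle: "(\<Sum>e\<in>edges_at_v E v. x e / rate T p v) \<le> 1"
  proof (cases "v \<in> V")
    case True
    have r0: "rate T p v \<ge> 0" using inst True unfolding mmp_instance_def rate_def by auto
    have "(\<Sum>e\<in>edges_at_v E v. x e / rate T p v) = (\<Sum>e\<in>edges_at_v E v. x e) / rate T p v"
      by (simp add: sum_divide_distrib)
    also have "\<dots> \<le> 1"
      using inst True r0 unfolding mmp_instance_def
      by (cases "rate T p v = 0") (auto simp: divide_le_eq_1)
    finally show ?thesis .
  next
    case False
    then have "edges_at_v E v = {}" using finE unfolding edges_at_v_def by auto
    then show ?thesis by simp
  qed
  have nn: "\<forall>w. 0 \<le> f w"
  proof
    fix w show "0 \<le> f w"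
    proof (cases w)
      case None then show ?thesis using sle by (simp add: f_def)
    next
      case (Some e)
      show ?thesis
      proof (cases "e \<in> edges_at_v E v")
        case True
        then have "snd e \<in> V" "snd e = v" "e \<in> E" using finE unfolding edges_at_v_def by auto
        then have "rate T p v \<ge> 0" "x e \<ge> 0" using inst unfolding mmp_instance_def rate_def by auto
        then show ?thesis using Some True by (simp add: f_def)
      qed (simp add: f_def Some)
    qed
  qed
  have "(\<integral>\<^sup>+w. ennreal (f w) \<partial>count_space UNIV) = (\<Sum>w\<in>insert None (Some ` edges_at_v E v). ennreal (f w))"
    by (rule nn_integral_count_space') (auto simp: fin f_def split: option.split)
  also have "\<dots> = ennreal (\<Sum>w\<in>insert None (Some ` edges_at_v E v). f w)"
    using nn by (intro sum_ennreal) auto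
  also have "(\<Sum>w\<in>insert None (Some ` edges_at_v E v). f w) = 1"
    using fin by (simp add: sum.reindex f_def)
  finally show ?thesis using nn by simp
qed

lemma pmf_sample: "pmf (sample_pmf E x (rate T p v) v) w = (case w of None \<Rightarrow> 1 - (\<Sum>e\<in>edges_at_v E v. x e / rate T p v)
     | Some e \<Rightarrow> if e \<in> edges_at_v E v then x e / rate T p v else 0)"
  unfolding sample_pmf_def using sample_ok[of v] by (subst pmf_embed_pmf) auto

lemma set_sample: "set_pmf (sample_pmf E x (rate T p v) v) \<subseteq> insert None (Some ` E)"
proof
  fix w assume "w \<in> set_pmf (sample_pmf E x (rate T p v) v)"
  then have "pmf (sample_pmf E x (rate T p v) v) w \<noteq> 0" by (simp add: set_pmf_eq)
  then show "w \<in> insert None (Some ` E)"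
    by (auto simp: pmf_sample edges_at_v_def split: option.splits if_splits)
qed


lemma rounds_sub: "set_pmf (mmp_rounds V E p x T n) \<subseteq> Pow E"
proof (induction n)
  case 0 then show ?case by simp
next
  case (Suc n)
  have "set_pmf (mmp_step V E p x T M) \<subseteq> Pow E" if "M \<subseteq> E" for M
  proof -
    have "\<And>v. set_pmf (sample_pmf E x (rate T p v) v) \<subseteq> insert None (Some ` E)" by (rule set_sample)
    have "set_pmf (case a of None \<Rightarrow> return_pmf M
     | Some v \<Rightarrow> map_pmf (\<lambda>s. case s of
            None \<Rightarrow> M
          | Some e \<Rightarrow> if (\<exists>e'\<in>M. fst e' = fst e) then M else insert e M)
          (sample_pmf E x (rate T p v) v)) \<subseteq> Pow E" for a
    proof (cases a)
      case (Some v)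
      have "(case s of None \<Rightarrow> M
          | Some e \<Rightarrow> if (\<exists>e'\<in>M. fst e' = fst e) then M else insert e M) \<subseteq> E"
        if "s \<in> set_pmf (sample_pmf E x (rate T p v) v)" for s
        using set_sample[of v] that \<open>M \<subseteq> E\<close> by (cases s) auto
      then show ?thesis using Some by auto
    qed (use that in auto)
    then show ?thesis unfolding mmp_step_def set_bind_pmf by blast
  qed
  then show ?case using Suc by (auto simp: set_bind_pmf)
qed

context
  fixes u :: 'u
begin

definition "Eu = edges_at_u E u"
definition "gg M = M \<inter> Eu"
definition "hh s = (case s of None \<Rightarrow> {} | Some e \<Rightarrow> if e \<in> Eu then {e} else {})"
definition "QQ = bind_pmf (arrival_pmf V p) (\<lambda>a. case a of None \<Rightarrow> return_pmf {} | Some v \<Rightarrow> map_pmf hh (sample_pmf E x (rate T p v) v))"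

lemma finEu: "finite Eu" "Eu \<subseteq> E"
  using finE unfolding Eu_def edges_at_u_def by auto

lemma step_map: assumes "M \<subseteq> E"
  shows "map_pmf gg (mmp_step V E p x T M) = (if gg M = {} then QQ else return_pmf (gg M))"
proof (cases "gg M = {}")
  case True
  have "gg \<circ> (\<lambda>s. case s of None \<Rightarrow> M
          | Some e \<Rightarrow> if (\<exists>e'\<in>M. fst e' = fst e) then M else insert e M) = hh"
  proof
    fix s show "(gg \<circ> (\<lambda>s. case s of None \<Rightarrow> M
          | Some e \<Rightarrow> if (\<exists>e'\<in>M. fst e' = fst e) then M else insert e M)) s = hh s"
      using True assms unfolding gg_def hh_def Eu_def edges_at_u_def
      by (auto split: option.splits)
  qed
  then have "map_pmf gg (mmp_step V E p x T M) = QQ"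
    using True unfolding mmp_step_def QQ_def map_bind_pmf
    by (intro bind_pmf_cong) (auto simp: pmf.map_comp split: option.splits)
  then show ?thesis using True by simp
next
  case False
  have "gg \<circ> (\<lambda>s. case s of None \<Rightarrow> M
          | Some e \<Rightarrow> if (\<exists>e'\<in>M. fst e' = fst e) then M else insert e M) = (\<lambda>_. gg M)"
  proof
    fix s show "(gg \<circ> (\<lambda>s. case s of None \<Rightarrow> M
          | Some e \<Rightarrow> if (\<exists>e'\<in>M. fst e' = fst e) then M else insert e M)) s = gg M"
      using False unfolding gg_def Eu_def edges_at_u_def
      by (auto split: option.splits)
  qed
  then have "map_pmf gg (mmp_step V E p x T M) = bind_pmf (arrival_pmf V p) (\<lambda>_. return_pmf (gg M))"
    unfolding mmp_step_def map_bind_pmf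
    by (intro bind_pmf_cong) (auto simp: pmf.map_comp split: option.splits)
  then show ?thesis using False by simp
qed


lemma set_arrival: "set_pmf (arrival_pmf V p) \<subseteq> insert None (Some ` V)"
proof
  fix w assume "w \<in> set_pmf (arrival_pmf V p)"
  then have "pmf (arrival_pmf V p) w \<noteq> 0" by (simp add: set_pmf_eq)
  then show "w \<in> insert None (Some ` V)"
    by (auto simp: pmf_arrival split: option.splits if_splits)
qed

lemma QQ_single: assumes e: "e \<in> Eu" shows "pmf QQ {e} = x e / T"
proof -
  have eE: "e \<in> E" "snd e \<in> V" using e finEu finE by auto
  have "pmf QQ {e} = (\<Sum>a\<in>insert None (Some ` V). pmf (arrival_pmf V p) a *
      pmf (case a of None \<Rightarrow> return_pmf {} | Some v \<Rightarrow> map_pmf hh (sample_pmf E x (rate T p v) v)) {e})"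
    unfolding QQ_def pmf_bind
    by (subst integral_measure_pmf[where A="insert None (Some ` V)"]) (use finE set_arrival in auto)
  also have "\<dots> = (\<Sum>v\<in>V. p v * pmf (sample_pmf E x (rate T p v) v) (Some e))"
  proof -
    have pre: "hh -` {{e}} = {Some e}" using e unfolding hh_def by (auto split: option.splits if_splits)
    show ?thesis using finE
      by (simp add: sum.reindex pmf_map pre measure_pmf_single pmf_arrival)
  qed
  also have "\<dots> = (\<Sum>v\<in>V. if v = snd e then p v * (x e / rate T p v) else 0)"
    using eE by (intro sum.cong) (auto simp: pmf_sample edges_at_v_def)
  also have "\<dots> = p (snd e) * (x e / rate T p (snd e))"
    using eE finE by simp
  also have "\<dots> = x e / T"
  proof (cases "p (snd e) = 0")
    case True
    have "(\<Sum>e'\<in>edges_at_v E (snd e). x e') \<le> 0"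
      using inst eE True unfolding mmp_instance_def rate_def by auto
    moreover have "x e \<le> (\<Sum>e'\<in>edges_at_v E (snd e). x e')"
      using inst eE finE unfolding mmp_instance_def
      by (intro member_le_sum) (auto simp: edges_at_v_def intro: finite_subset)
    moreover have "x e \<ge> 0" using inst eE unfolding mmp_instance_def by auto
    ultimately show ?thesis using True by simp
  qed (simp add: rate_def)
  finally show ?thesis .
qed

lemma xu_sum: "(\<Sum>e\<in>Eu. x e) = x_vertex E x u"
  unfolding x_vertex_def Eu_def ..

lemma QQ_empty: "pmf QQ {} = 1 - x_vertex E x u / T"
proof -
  let ?A = "insert {} ((\<lambda>e. {e}) ` Eu)"
  have "set_pmf QQ \<subseteq> ?A"
    unfolding QQ_def hh_def by (auto simp: set_bind_pmf split: option.splits if_splits)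
  then have "(\<Sum>S\<in>?A. pmf QQ S) = 1" using finEu by (intro sum_pmf_eq_1) auto
  moreover have "(\<Sum>S\<in>?A. pmf QQ S) = pmf QQ {} + (\<Sum>e\<in>Eu. pmf QQ {e})"
    using finEu by (subst sum.insert) (auto simp: sum.reindex)
  moreover have "(\<Sum>e\<in>Eu. pmf QQ {e}) = x_vertex E x u / T"
    by (simp add: QQ_single xu_sum[symmetric] sum_divide_distrib)
  ultimately show ?thesis by simp
qed

definition "KK S = (if S = {} then QQ else return_pmf S)"
definition "mu n = map_pmf gg (mmp_rounds V E p x T n)"

lemma mu_Suc: "mu (Suc n) = bind_pmf (mu n) KK"
proof -
  have "mu (Suc n) = bind_pmf (mmp_rounds V E p x T n) (\<lambda>M. map_pmf gg (mmp_step V E p x T M))"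
    unfolding mu_def by (simp add: map_bind_pmf)
  also have "\<dots> = bind_pmf (mmp_rounds V E p x T n) (\<lambda>M. KK (gg M))"
  proof (intro bind_pmf_cong refl)
    fix M assume "M \<in> set_pmf (mmp_rounds V E p x T n)"
    then have "M \<subseteq> E" using rounds_sub[of n] by auto
    then show "map_pmf gg (mmp_step V E p x T M) = KK (gg M)"
      by (simp add: step_map KK_def)
  qed
  also have "\<dots> = bind_pmf (mu n) KK" unfolding mu_def bind_map_pmf ..
  finally show ?thesis .
qed

lemma mu_Suc_empty: "pmf (mu (Suc n)) {} = pmf (mu n) {} * pmf QQ {}"
proof -
  have "pmf (mu (Suc n)) {} = (\<integral>S. pmf QQ {} * indicator {{}} S \<partial>measure_pmf (mu n))"
    unfolding mu_Suc pmf_bind by (intro Bochner_Integration.integral_cong refl) (auto simp: KK_def indicator_def)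
  also have "\<dots> = pmf QQ {} * pmf (mu n) {}"
    by (simp add: measure_pmf_single)
  finally show ?thesis by simp
qed

lemma mu_Suc_single: assumes "e \<in> Eu"
  shows "pmf (mu (Suc n)) {e} = pmf (mu n) {e} + pmf (mu n) {} * pmf QQ {e}"
proof -
  have "pmf (mu (Suc n)) {e} = (\<integral>S. indicator {{e}} S + pmf QQ {e} * indicator {{}} S \<partial>measure_pmf (mu n))"
    unfolding mu_Suc pmf_bind by (intro Bochner_Integration.integral_cong refl) (auto simp: KK_def indicator_def)
  also have "\<dots> = pmf (mu n) {e} + pmf QQ {e} * pmf (mu n) {}"
    by (subst Bochner_Integration.integral_add) (auto simp: measure_pmf_single measure_pmf.emeasure_eq_measure intro!: integrable_indicator)
  finally show ?thesis by simp
qed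

lemma mu_closed:
  defines "r \<equiv> 1 - x_vertex E x u / T"
  shows "pmf (mu n) {} = r ^ n \<and> (\<forall>e\<in>Eu. pmf (mu n) {e} = x e / T * (\<Sum>k<n. r ^ k))"
proof (induction n)
  case 0
  then show ?case by (simp add: mu_def gg_def)
next
  case (Suc n)
  then show ?case
    by (simp add: mu_Suc_empty mu_Suc_single QQ_empty QQ_single r_def algebra_simps)
qed


lemma final_pmfs:
  defines "r \<equiv> 1 - x_vertex E x u / T"
  shows "pmf (map_pmf (\<lambda>M. restrict_vec E u (match_vec M)) (mmp_run V E p x T)) (\<lambda>_. 0) = r ^ T"
    and "e \<in> edges_at_u E u \<Longrightarrow>
      pmf (map_pmf (\<lambda>M. restrict_vec E u (match_vec M)) (mmp_run V E p x T)) (unit_vec e)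
         = x e / T * (\<Sum>k<T. r ^ k)"
proof -
  have "(\<lambda>M. restrict_vec E u (match_vec M)) -` {\<lambda>_. 0} = gg -` {{}}"
    unfolding gg_def Eu_def restrict_vec_def match_vec_def
    by (auto simp: fun_eq_iff split: if_splits)
  then show "pmf (map_pmf (\<lambda>M. restrict_vec E u (match_vec M)) (mmp_run V E p x T)) (\<lambda>_. 0) = r ^ T"
    using mu_closed[of T] unfolding r_def mu_def mmp_run_def pmf_map by simp
  assume e: "e \<in> edges_at_u E u"
  have "(\<lambda>M. restrict_vec E u (match_vec M)) -` {unit_vec e} = gg -` {{e}}"
  proof (intro set_eqI iffI)
    fix M assume "M \<in> (\<lambda>M. restrict_vec E u (match_vec M)) -` {unit_vec e}"
    then have eq: "restrict_vec E u (match_vec M) = unit_vec e" by simp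
    have H: "(if e' \<in> Eu then (if e' \<in> M then 1 else 0) else 0) = (if e' = e then 1 else (0::real))" for e'
      using fun_cong[OF eq, of e'] unfolding Eu_def restrict_vec_def match_vec_def unit_vec_def by simp
    have "M \<inter> Eu = {e}"
    proof (intro set_eqI iffI)
      fix e' assume "e' \<in> M \<inter> Eu" then show "e' \<in> {e}" using H[of e'] by (auto split: if_splits)
    next
      fix e' assume "e' \<in> {e}" then show "e' \<in> M \<inter> Eu" using H[of e] e by (auto simp: Eu_def split: if_splits)
    qed
    then show "M \<in> gg -` {{e}}" by (simp add: gg_def)
  next
    fix M assume "M \<in> gg -` {{e}}"
    then have H: "M \<inter> Eu = {e}" by (simp add: gg_def)
    show "M \<in> (\<lambda>M. restrict_vec E u (match_vec M)) -` {unit_vec e}"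
      unfolding restrict_vec_def match_vec_def unit_vec_def
      using H e by (auto simp: fun_eq_iff Eu_def)
  qed
  then show "pmf (map_pmf (\<lambda>M. restrict_vec E u (match_vec M)) (mmp_run V E p x T)) (unit_vec e)
         = x e / T * (\<Sum>k<T. r ^ k)"
    using mu_closed[of T] e unfolding r_def mu_def mmp_run_def pmf_map Eu_def by simp
qed

end
end

theorem lemma3:
  fixes U :: "nat \<Rightarrow> 'u set" and V :: "nat \<Rightarrow> 'v set"
    and E :: "nat \<Rightarrow> ('u \<times> 'v) set" and p :: "nat \<Rightarrow> 'v \<Rightarrow> real"
    and x :: "nat \<Rightarrow> ('u \<times> 'v) \<Rightarrow> real" and u :: "nat \<Rightarrow> 'u"
  assumes inst: "eventually (\<lambda>T. mmp_instance (U T) (V T) (E T) (p T) (x T) T) sequentially"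
    and small: "(\<lambda>T. real (card (U T))) \<in> o(\<lambda>T. sqrt (real T))"
    and uU: "eventually (\<lambda>T. u T \<in> U T) sequentially"
  shows "(\<lambda>T. pmf (map_pmf (\<lambda>M. restrict_vec (E T) (u T) (match_vec M)) (mmp_run (V T) (E T) (p T) (x T) T))
                  (\<lambda>_. 0)
              - exp (- x_vertex (E T) (x T) (u T))) \<longlonglongrightarrow> 0 \<and>
    (\<forall>e :: nat \<Rightarrow> 'u \<times> 'v. eventually (\<lambda>T. e T \<in> edges_at_u (E T) (u T)) sequentially \<longrightarrow>
      (\<lambda>T. pmf (map_pmf (\<lambda>M. restrict_vec (E T) (u T) (match_vec M)) (mmp_run (V T) (E T) (p T) (x T) T))
                  (unit_vec (e T))
              - (1 - exp (- x_vertex (E T) (x T) (u T))) * x T (e T) / x_vertex (E T) (x T) (u T))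
        \<longlonglongrightarrow> 0)"
  proof -
  let ?a = "\<lambda>T. x_vertex (E T) (x T) (u T)"
  let ?P1 = "\<lambda>T. pmf (map_pmf (\<lambda>M. restrict_vec (E T) (u T) (match_vec M)) (mmp_run (V T) (E T) (p T) (x T) T))"
  have ev: "eventually (\<lambda>T. mmp_instance (U T) (V T) (E T) (p T) (x T) T \<and> u T \<in> U T \<and> 1 \<le> T) sequentially"
    using inst uU eventually_ge_at_top[of 1] by eventually_elim auto
  have a_bounds: "0 \<le> ?a T \<and> ?a T \<le> 1"
    if "mmp_instance (U T) (V T) (E T) (p T) (x T) T" "u T \<in> U T" for T
    using that unfolding mmp_instance_def x_vertex_def edges_at_u_def
    by (auto intro!: sum_nonneg)
  have lim: "(\<lambda>T. 1 / real T) \<longlonglongrightarrow> 0" by (rule lim_1_over_n)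
  have part1: "(\<lambda>T. ?P1 T (\<lambda>_. 0) - exp (- ?a T)) \<longlonglongrightarrow> 0"
  proof (rule Lim_null_comparison[OF _ lim])
    show "eventually (\<lambda>T. norm (?P1 T (\<lambda>_. 0) - exp (- ?a T)) \<le> 1 / real T) sequentially"
      using ev
    proof eventually_elim
      case (elim T)
      then show ?case
        using final_pmfs(1)[where U="U T" and V="V T" and E="E T" and p="p T" and x="x T" and T=T and u="u T"] a_bounds[of T]
          exp_approx[of "?a T" T] by simp
    qed
  qed
  have part2: "(\<lambda>T. ?P1 T (unit_vec (e T)) - (1 - exp (- ?a T)) * x T (e T) / ?a T) \<longlonglongrightarrow> 0"
    if eE: "eventually (\<lambda>T. e T \<in> edges_at_u (E T) (u T)) sequentially" for e
  proof (rule Lim_null_comparison[OF _ lim])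
    show "eventually (\<lambda>T. norm (?P1 T (unit_vec (e T)) - (1 - exp (- ?a T)) * x T (e T) / ?a T) \<le> 1 / real T) sequentially"
      using ev eE
    proof eventually_elim
      case (elim T)
      then have fin: "finite (edges_at_u (E T) (u T))" and sub: "edges_at_u (E T) (u T) \<subseteq> E T"
        using finE[of "U T" "V T" "E T" "p T" "x T" T] unfolding edges_at_u_def by auto
      have nn: "\<forall>e\<in>E T. 0 \<le> x T e" using elim unfolding mmp_instance_def by auto
      have xe0: "0 \<le> x T (e T)" using nn sub elim by auto
      have xea: "x T (e T) \<le> ?a T"
        unfolding x_vertex_def using fin sub nn elim by (intro member_le_sum) auto
      show ?case
        using final_pmfs(2)[where U="U T" and V="V T" and E="E T" and p="p T" and x="x T" and T=T and u="u T" and e="e T"] a_bounds[of T] elim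
          sum_approx[of "x T (e T)" "?a T" T] xe0 xea by simp
    qed
  qed
  show ?thesis using part1 part2 by blast
qed

end
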